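(* Let $A\colon\mathbb{T}^d\to\mathbb{T}^d$ be a linear Anosov automorphism with splitting $E^s_A\oplus E^u_A$, $d_s=\dim E^s_A$, $d_u=\dim E^u_A$, with an adapted norm in which $E^s_A\perp E^u_A$, $\|A|_{E^s_A}\|\le\lambda$, $m(A|_{E^u_A})\ge\gamma$, $0<\lambda<1<\gamma$. Let $f\colon\mathbb{T}^d\to\mathbb{T}^d$ be a diffeomorphism homotopic to $A$ admitting a dominated splitting $T\mathbb{T}^d=E\oplus F$ with $\dim E=d_s$, $\dim F=d_u$, $\|Df|_E\|\le\hat\gamma<\gamma$ and $m(Df|_F)\ge\hat\lambda>\lambda$. Suppose $E$ and $F$ are integrable, and let $\mathcal E$ and $\mathcal F$ be the lifts to $\mathbb{R}^d$ of the corresponding tangent foliations. Then there is $R>0$ such that for every $x\in\mathbb{R}^d$, $$\mathcal E(x)\subset B_R(\widetilde W^s_A(x))\qquad\text{and}\qquad\mathcal F(x)\subset B_R(\widetilde W^u_A(x)),$$ where $\widetilde W^s_A(x)=x+E^s_A$, $\widetilde W^u_A(x)=x+E^u_A$ and $B_R(S)$ denotes the set of points of $\mathbb{R}^d$ at distance at most $R$ from $S$.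
   Context: For a linear map $T$, $m(T):=\|T^{-1}\|^{-1}$. A dominated splitting $TM=E\oplus F$ is a continuous $Df$-invariant splitting with constants $C>0$, $0<\nu<1$ such that $\|Df^n|_{E(x)}\|\cdot\|Df^{-n}|_{F(f^nx)}\|\le C\nu^n$ for all $x$, $n>0$. Norms and distances on $\mathbb{R}^d$ and $T\mathbb{T}^d$ are those induced by the adapted norm for $A$. *)

theory Defs
  imports "HOL-Analysis.Analysis"
begin

section \<open>The torus as R^d modulo the integer lattice\<close>

definition int_lattice :: "(real^'n) set" where
  "int_lattice = {z. \<forall>i. z $ i \<in> \<int>}"

definition torus_automorphism :: "real^'n^'n \<Rightarrow> bool" where
  "torus_automorphism A \<longleftrightarrow> (\<forall>i j. A $ i $ j \<in> \<int>) \<and> \<bar>det A\<bar> = 1"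

section \<open>The adapted norm, given by a positive definite symmetric matrix Q\<close>

definition ipQ :: "real^'n^'n \<Rightarrow> real^'n \<Rightarrow> real^'n \<Rightarrow> real" where
  "ipQ Q x y = x \<bullet> (Q *v y)"

definition qnorm :: "real^'n^'n \<Rightarrow> real^'n \<Rightarrow> real" where
  "qnorm Q x = sqrt (ipQ Q x x)"

definition inner_product_matrix :: "real^'n^'n \<Rightarrow> bool" where
  "inner_product_matrix Q \<longleftrightarrow> transpose Q = Q \<and> (\<forall>x. x \<noteq> 0 \<longrightarrow> ipQ Q x x > 0)"

definition restr_norm :: "real^'n^'n \<Rightarrow> real^'n^'n \<Rightarrow> (real^'n) set \<Rightarrow> real" where
  "restr_norm Q L S = (SUP v\<in>S - {0}. qnorm Q (L *v v) / qnorm Q v)"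

text \<open>Conorm \<open>m(L|_S) = \<parallel>(L|_S)^{-1}\<parallel>^{-1}\<close>, written out as an infimum.\<close>
definition restr_conorm :: "real^'n^'n \<Rightarrow> real^'n^'n \<Rightarrow> (real^'n) set \<Rightarrow> real" where
  "restr_conorm Q L S = (INF v\<in>S - {0}. qnorm Q (L *v v) / qnorm Q v)"

definition qnbhd :: "real^'n^'n \<Rightarrow> real \<Rightarrow> (real^'n) set \<Rightarrow> (real^'n) set" where
  "qnbhd Q R S = {y. \<exists>s\<in>S. qnorm Q (y - s) \<le> R}"

section \<open>Diffeomorphisms of the torus homotopic to A, via lifts\<close>

text \<open>F is the lift to R^d of a C^1 diffeomorphism f of the torus homotopic to A:
  F is a bijection with continuous, everywhere invertible derivative DF and
  F(x + z) = F x + A z for integer vectors z.\<close>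
definition torus_diffeo_lift :: "real^'n^'n \<Rightarrow> (real^'n \<Rightarrow> real^'n) \<Rightarrow> (real^'n \<Rightarrow> real^'n^'n) \<Rightarrow> bool" where
  "torus_diffeo_lift A F DF \<longleftrightarrow>
     bij F \<and>
     (\<forall>x. (F has_derivative (\<lambda>h. DF x *v h)) (at x)) \<and>
     continuous_on UNIV DF \<and>
     (\<forall>x. invertible (DF x)) \<and>
     (\<forall>x z. z \<in> int_lattice \<longrightarrow> F (x + z) = F x + A *v z)"

fun Dn :: "(real^'n \<Rightarrow> real^'n) \<Rightarrow> (real^'n \<Rightarrow> real^'n^'n) \<Rightarrow> nat \<Rightarrow> real^'n \<Rightarrow> real^'n^'n" where
  "Dn F DF 0 x = mat 1"
| "Dn F DF (Suc n) x = DF ((F ^^ n) x) ** Dn F DF n x"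

definition periodic_field :: "(real^'n \<Rightarrow> (real^'n) set) \<Rightarrow> bool" where
  "periodic_field E \<longleftrightarrow> (\<forall>x z. z \<in> int_lattice \<longrightarrow> E (x + z) = E x)"

text \<open>Continuity of a field of subspaces (in the Grassmannian / gap topology).\<close>
definition continuous_subspace_field :: "real^'n^'n \<Rightarrow> (real^'n \<Rightarrow> (real^'n) set) \<Rightarrow> bool" where
  "continuous_subspace_field Q E \<longleftrightarrow>
     (\<forall>x \<epsilon>. \<epsilon> > 0 \<longrightarrow> (\<exists>\<delta>>0. \<forall>y. qnorm Q (y - x) < \<delta> \<longrightarrow>
        (\<forall>v\<in>E x. \<exists>w\<in>E y. qnorm Q (v - w) \<le> \<epsilon> * qnorm Q v) \<and>
        (\<forall>w\<in>E y. \<exists>v\<in>E x. qnorm Q (w - v) \<le> \<epsilon> * qnorm Q w)))"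

definition dominated_splitting ::
  "real^'n^'n \<Rightarrow> (real^'n \<Rightarrow> real^'n) \<Rightarrow> (real^'n \<Rightarrow> real^'n^'n) \<Rightarrow>
   (real^'n \<Rightarrow> (real^'n) set) \<Rightarrow> (real^'n \<Rightarrow> (real^'n) set) \<Rightarrow> bool" where
  "dominated_splitting Q F DF E G \<longleftrightarrow>
     (\<forall>x. subspace (E x) \<and> subspace (G x) \<and> E x \<inter> G x = {0} \<and>
          {a + b |a b. a \<in> E x \<and> b \<in> G x} = UNIV) \<and>
     continuous_subspace_field Q E \<and> continuous_subspace_field Q G \<and>
     (\<forall>x. (\<lambda>v. DF x *v v) ` E x = E (F x) \<and> (\<lambda>v. DF x *v v) ` G x = G (F x)) \<and>
     (\<exists>C>0. \<exists>\<nu>. 0 < \<nu> \<and> \<nu> < 1 \<and>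
        (\<forall>x n. n > 0 \<longrightarrow>
           restr_norm Q (Dn F DF n x) (E x) *
           restr_norm Q (matrix_inv (Dn F DF n x)) (G ((F ^^ n) x)) \<le> C * \<nu> ^ n))"

text \<open>Foliation charts: phi is defined on the product of the unit ball of the model
  leaf space M with the unit ball of the model transversal space N.\<close>
definition chart_dom :: "(real^'n) set \<Rightarrow> (real^'n) set \<Rightarrow> ((real^'n) \<times> (real^'n)) set" where
  "chart_dom M N = (M \<inter> ball 0 1) \<times> (N \<inter> ball 0 1)"

definition plaque_through ::
  "(real^'n) set \<Rightarrow> (real^'n) set \<Rightarrow> ((real^'n) \<times> (real^'n) \<Rightarrow> real^'n) \<Rightarrow> real^'n \<Rightarrow> (real^'n) set" where
  "plaque_through M N \<phi> y =
     {z. \<exists>a a' b. (a, b) \<in> chart_dom M N \<and> (a', b) \<in> chart_dom M N \<and> \<phi> (a, b) = y \<and> \<phi> (a', b) = z}"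

definition foliation_chart ::
  "(real^'n) set \<Rightarrow> (real^'n) set \<Rightarrow> (real^'n \<Rightarrow> (real^'n) set) \<Rightarrow> ((real^'n) \<times> (real^'n) \<Rightarrow> real^'n) \<Rightarrow> bool" where
  "foliation_chart M N E \<phi> \<longleftrightarrow>
     open (\<phi> ` chart_dom M N) \<and>
     (\<exists>\<psi>. homeomorphism (chart_dom M N) (\<phi> ` chart_dom M N) \<phi> \<psi>) \<and>
     (\<forall>b \<in> N \<inter> ball 0 1. \<exists>D :: real^'n \<Rightarrow> real^'n^'n.
        continuous_on (M \<inter> ball 0 1) D \<and>
        (\<forall>a \<in> M \<inter> ball 0 1.
           ((\<lambda>a'. \<phi> (a', b)) has_derivative (\<lambda>h. D a *v h)) (at a within (M \<inter> ball 0 1)) \<and>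
           (\<lambda>h. D a *v h) ` M = E (\<phi> (a, b))))"

definition foliation_atlas ::
  "(real^'n) set \<Rightarrow> (real^'n) set \<Rightarrow> (real^'n \<Rightarrow> (real^'n) set) \<Rightarrow> ((real^'n) \<times> (real^'n) \<Rightarrow> real^'n) set \<Rightarrow> bool" where
  "foliation_atlas M N E \<A> \<longleftrightarrow>
     (\<forall>\<phi>\<in>\<A>. foliation_chart M N E \<phi>) \<and>
     (\<forall>p. \<exists>\<phi>\<in>\<A>. p \<in> \<phi> ` chart_dom M N) \<and>
     (\<forall>\<phi>1\<in>\<A>. \<forall>\<phi>2\<in>\<A>. \<forall>a b. (a, b) \<in> chart_dom M N \<longrightarrow> \<phi>1 (a, b) \<in> \<phi>2 ` chart_dom M N \<longrightarrow>
        (\<exists>\<epsilon>>0. \<forall>a'\<in>M \<inter> ball 0 1. norm (a' - a) < \<epsilon> \<longrightarrow>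
            \<phi>1 (a', b) \<in> plaque_through M N \<phi>2 (\<phi>1 (a, b))))"

definition leaf_of ::
  "(real^'n) set \<Rightarrow> (real^'n) set \<Rightarrow> ((real^'n) \<times> (real^'n) \<Rightarrow> real^'n) set \<Rightarrow> real^'n \<Rightarrow> (real^'n) set" where
  "leaf_of M N \<A> x =
     {y. (\<lambda>u v. \<exists>\<phi>\<in>\<A>. v \<in> plaque_through M N \<phi> u \<or> u \<in> plaque_through M N \<phi> v)\<^sup>*\<^sup>* x y}"

text \<open>W x is the leaf through x of a (C^0) foliation with C^1 leaves tangent to E,
  whose leaves are modelled on M (dimension of the leaves) with transversal model N.\<close>
definition tangent_foliation ::
  "(real^'n) set \<Rightarrow> (real^'n) set \<Rightarrow> (real^'n \<Rightarrow> (real^'n) set) \<Rightarrow> (real^'n \<Rightarrow> (real^'n) set) \<Rightarrow> bool" where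
  "tangent_foliation M N E W \<longleftrightarrow>
     (\<exists>\<A>. foliation_atlas M N E \<A> \<and> (\<forall>x. W x = leaf_of M N \<A> x))"

text \<open>W is the lift of a foliation of the torus.\<close>
definition periodic_foliation :: "(real^'n \<Rightarrow> (real^'n) set) \<Rightarrow> bool" where
  "periodic_foliation W \<longleftrightarrow> (\<forall>x z. z \<in> int_lattice \<longrightarrow> W (x + z) = (\<lambda>y. y + z) ` W x)"

end

theory Submission
  imports Defs
begin


lemma ipQ_sym: assumes "inner_product_matrix Q" shows "ipQ Q x y = ipQ Q y x"
proof -
  have "transpose Q = Q" using assms by (simp add: inner_product_matrix_def)
  have "ipQ Q x y = x \<bullet> (transpose Q *v y)" using \<open>transpose Q = Q\<close> by (simp add: ipQ_def)
  also have "\<dots> = (y v* Q) \<bullet> x" by (simp add: inner_commute)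
  also have "\<dots> = ipQ Q y x" by (simp add: dot_lmul_matrix ipQ_def)
  finally show ?thesis .
qed

lemma ipQ_add_left: "ipQ Q (x + y) z = ipQ Q x z + ipQ Q y z" by (simp add: ipQ_def inner_add_left)
lemma ipQ_add_right: "ipQ Q z (x + y) = ipQ Q z x + ipQ Q z y" by (simp add: ipQ_def matrix_vector_right_distrib inner_add_right)
lemma ipQ_diff_left: "ipQ Q (x - y) z = ipQ Q x z - ipQ Q y z" by (simp add: ipQ_def inner_diff_left)
lemma ipQ_diff_right: "ipQ Q z (x - y) = ipQ Q z x - ipQ Q z y" by (simp add: ipQ_def matrix_vector_mult_diff_distrib inner_diff_right)
lemma ipQ_scale_left: "ipQ Q (c *\<^sub>R x) z = c * ipQ Q x z" by (simp add: ipQ_def)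
lemma ipQ_scale_right: "ipQ Q z (c *\<^sub>R x) = c * ipQ Q z x" by (simp add: ipQ_def matrix_vector_mult_scaleR)
lemma ipQ_zero[simp]: "ipQ Q 0 x = 0" "ipQ Q x 0 = 0" by (simp_all add: ipQ_def)

lemma ipQ_nonneg: assumes "inner_product_matrix Q" shows "ipQ Q x x \<ge> 0"
proof (cases "x = 0")
  case True thus ?thesis by simp
next
  case False
  have "ipQ Q x x > 0" using assms False by (simp add: inner_product_matrix_def)
  thus ?thesis by simp
qed

lemma qnorm_sq: assumes "inner_product_matrix Q" shows "qnorm Q x ^ 2 = ipQ Q x x"
  using ipQ_nonneg[OF assms] by (simp add: qnorm_def)

lemma qnorm_nonneg: assumes "inner_product_matrix Q" shows "qnorm Q x \<ge> 0"
  using ipQ_nonneg[OF assms] by (simp add: qnorm_def)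

lemma qnorm_zero[simp]: "qnorm Q 0 = 0" by (simp add: qnorm_def)

lemma qnorm_scale: assumes "inner_product_matrix Q" shows "qnorm Q (c *\<^sub>R x) = \<bar>c\<bar> * qnorm Q x"
proof -
  have "ipQ Q (c *\<^sub>R x) (c *\<^sub>R x) = c^2 * ipQ Q x x" by (simp add: ipQ_scale_left ipQ_scale_right power2_eq_square)
  thus ?thesis by (simp add: qnorm_def real_sqrt_mult)
qed

lemma qnorm_minus: assumes "inner_product_matrix Q" shows "qnorm Q (- x) = qnorm Q x"
  using qnorm_scale[OF assms, of "-1" x] by simp

lemma qnorm_commute: assumes "inner_product_matrix Q" shows "qnorm Q (x - y) = qnorm Q (y - x)"
  using qnorm_minus[OF assms, of "x - y"] by simp

lemma ipQ_CS: assumes Q: "inner_product_matrix Q" shows "\<bar>ipQ Q x y\<bar> \<le> qnorm Q x * qnorm Q y"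
proof -
  let ?a = "ipQ Q x x" and ?b = "ipQ Q x y" and ?c = "ipQ Q y y"
  have a0: "?a \<ge> 0" and c0: "?c \<ge> 0" using ipQ_nonneg[OF Q] by auto
  have quad: "\<And>t. ?a * t^2 + 2 * ?b * t + ?c \<ge> 0"
  proof -
    fix t :: real
    have "0 \<le> ipQ Q (t *\<^sub>R x + y) (t *\<^sub>R x + y)" by (rule ipQ_nonneg[OF Q])
    also have "\<dots> = t * (t * ?a) + t * ipQ Q y x + (t * ?b + ?c)"
      by (simp only: ipQ_add_left ipQ_add_right ipQ_scale_left ipQ_scale_right distrib_left add.assoc)
    also have "\<dots> = ?a * t^2 + 2 * ?b * t + ?c"
      unfolding ipQ_sym[OF Q, of y x] by (simp add: power2_eq_square algebra_simps)
    finally show "?a * t^2 + 2 * ?b * t + ?c \<ge> 0" .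
  qed
  have "?b^2 \<le> ?a * ?c"
  proof (cases "?a = 0")
    case True
    show ?thesis
    proof (rule ccontr)
      assume "\<not> ?thesis" hence "?b \<noteq> 0" using True by simp
      have "0 \<le> 2 * ?b * (- (?c + 1) / (2 * ?b)) + ?c" using quad[of "- (?c + 1) / (2 * ?b)"] True by simp
      also have "\<dots> = -1" using \<open>?b \<noteq> 0\<close> by (simp add: field_simps)
      finally show False by simp
    qed
  next
    case False
    hence ap: "?a > 0" using a0 by simp
    have "0 \<le> ?a * (- ?b / ?a)^2 + 2 * ?b * (- ?b / ?a) + ?c" by (rule quad)
    also have "\<dots> = (?a * ?c - ?b^2) / ?a" using ap by (simp add: field_simps power2_eq_square)
    finally show ?thesis using ap by (simp add: divide_nonneg_pos le_divide_eq)
  qed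
  hence "\<bar>?b\<bar> \<le> sqrt (?a * ?c)" by (simp add: real_le_rsqrt)
  thus ?thesis by (simp add: qnorm_def real_sqrt_mult)
qed

lemma qnorm_triangle: assumes Q: "inner_product_matrix Q" shows "qnorm Q (x + y) \<le> qnorm Q x + qnorm Q y"
proof -
  have "qnorm Q (x + y) ^ 2 = ipQ Q x x + ipQ Q y x + (ipQ Q x y + ipQ Q y y)"
    by (simp only: qnorm_sq[OF Q] ipQ_add_left ipQ_add_right)
  also have "\<dots> = qnorm Q x ^ 2 + 2 * ipQ Q x y + qnorm Q y ^ 2"
    unfolding ipQ_sym[OF Q, of y x] qnorm_sq[OF Q] by simp
  also have "\<dots> \<le> qnorm Q x ^ 2 + 2 * (qnorm Q x * qnorm Q y) + qnorm Q y ^ 2"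
    using ipQ_CS[OF Q, of x y] by simp
  also have "\<dots> = (qnorm Q x + qnorm Q y)^2" by (simp add: power2_eq_square algebra_simps)
  finally show ?thesis using qnorm_nonneg[OF Q] by (meson add_nonneg_nonneg power2_le_imp_le)
qed

lemma qnorm_triangle_diff: assumes Q: "inner_product_matrix Q" shows "qnorm Q (x - z) \<le> qnorm Q (x - y) + qnorm Q (y - z)"
  using qnorm_triangle[OF Q, of "x - y" "y - z"] by simp

lemma qnorm_pos: assumes Q: "inner_product_matrix Q" and "x \<noteq> 0" shows "qnorm Q x > 0"
  using assms unfolding inner_product_matrix_def qnorm_def by auto

lemma continuous_qnorm: "continuous_on S (qnorm Q)"
  unfolding qnorm_def ipQ_def by (intro continuous_intros)

lemma qnorm_upper: "\<exists>C>0. \<forall>x. qnorm Q x \<le> C * norm x"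
proof -
  obtain B where B: "B > 0" "\<And>x. norm (Q *v x) \<le> B * norm x"
    using bounded_linear.pos_bounded[OF matrix_vector_mul_bounded_linear[of Q]] by (auto simp: mult.commute)
  have "qnorm Q x \<le> sqrt B * norm x" for x
  proof -
    have "ipQ Q x x \<le> norm x * norm (Q *v x)" unfolding ipQ_def
      by (meson Cauchy_Schwarz_ineq2 abs_le_D1)
    also have "\<dots> \<le> norm x * (B * norm x)" by (simp add: B(2) mult_left_mono)
    also have "\<dots> = (sqrt B * norm x)^2" using B by (simp add: power_mult_distrib power2_eq_square)
    finally have "ipQ Q x x \<le> (sqrt B * norm x)^2" .
    hence "sqrt (ipQ Q x x) \<le> sqrt ((sqrt B * norm x)^2)" by (rule real_sqrt_le_mono)
    also have "\<dots> = sqrt B * norm x" using B by simp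
    finally show ?thesis unfolding qnorm_def .
  qed
  thus ?thesis using B by (intro exI[of _ "sqrt B"]) auto
qed

lemma qnorm_lower: assumes Q: "inner_product_matrix Q" shows "\<exists>c>0. \<forall>x. c * norm x \<le> qnorm Q x"
proof -
  have c1: "compact (sphere (0::real^'a) 1)" by (rule compact_sphere)
  have c2: "sphere (0::real^'a) 1 \<noteq> {}" by (simp add: sphere_eq_empty)
  obtain y where y1: "y \<in> sphere 0 1" and y2: "\<forall>z\<in>sphere 0 1. qnorm Q y \<le> qnorm Q z"
    using continuous_attains_inf[OF c1 c2 continuous_qnorm[of _ Q]] by blast
  have y: "y \<in> sphere 0 1" "\<And>z. z \<in> sphere 0 1 \<Longrightarrow> qnorm Q y \<le> qnorm Q z" using y1 y2 by auto
  have "y \<noteq> 0" using y by auto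
  hence c: "qnorm Q y > 0" by (rule qnorm_pos[OF Q])
  have "qnorm Q y * norm x \<le> qnorm Q x" for x
  proof (cases "x = 0")
    case False
    hence "(1 / norm x) *\<^sub>R x \<in> sphere 0 1" by (simp add: norm_scaleR)
    hence "qnorm Q y \<le> qnorm Q ((1 / norm x) *\<^sub>R x)" by (rule y(2))
    also have "\<dots> = qnorm Q x / norm x" using qnorm_scale[OF Q] by simp
    finally show ?thesis using False by (simp add: field_simps)
  qed simp
  thus ?thesis using c by blast
qed



lemma ratio_bdd: assumes Q: "inner_product_matrix Q"
  shows "bdd_above ((\<lambda>v. qnorm Q (L *v v) / qnorm Q v) ` S)"
proof -
  obtain C where C: "C > 0" "\<And>x. qnorm Q x \<le> C * norm x" using qnorm_upper by blast
  obtain c where c: "c > 0" "\<And>x. c * norm x \<le> qnorm Q x" using qnorm_lower[OF Q] by blast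
  obtain B where B: "B > 0" "\<And>x. norm (L *v x) \<le> B * norm x"
    using bounded_linear.pos_bounded[OF matrix_vector_mul_bounded_linear[of L]] by (auto simp: mult.commute)
  have "qnorm Q (L *v v) / qnorm Q v \<le> C * B / c" for v
  proof (cases "v = 0")
    case True thus ?thesis using C B c by simp
  next
    case False
    have qp: "qnorm Q v > 0" using qnorm_pos[OF Q False] .
    have "qnorm Q (L *v v) \<le> C * (B * norm v)" using C(2)[of "L *v v"] B(2)[of v] C(1)
      by (meson mult_left_mono order_trans less_imp_le)
    also have "\<dots> = (C * B / c) * (c * norm v)" using c by simp
    also have "\<dots> \<le> (C * B / c) * qnorm Q v" using c C B by (intro mult_left_mono c(2)) auto
    finally show ?thesis using qp by (simp add: divide_le_eq)
  qed
  thus ?thesis by (intro bdd_aboveI2) auto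
qed

lemma restr_norm_le: assumes Q: "inner_product_matrix Q" and le: "restr_norm Q L S \<le> g" and v: "v \<in> S"
  shows "qnorm Q (L *v v) \<le> g * qnorm Q v"
proof (cases "v = 0")
  case True thus ?thesis by simp
next
  case False
  have qp: "qnorm Q v > 0" using qnorm_pos[OF Q False] .
  have "qnorm Q (L *v v) / qnorm Q v \<le> restr_norm Q L S" unfolding restr_norm_def
    using v False by (intro cSUP_upper ratio_bdd[OF Q]) auto
  with le have "qnorm Q (L *v v) / qnorm Q v \<le> g" by simp
  thus ?thesis using qp by (simp add: divide_le_eq)
qed

lemma restr_conorm_ge: assumes Q: "inner_product_matrix Q" and le: "g \<le> restr_conorm Q L S" and v: "v \<in> S"
  shows "g * qnorm Q v \<le> qnorm Q (L *v v)"
proof (cases "v = 0")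
  case True thus ?thesis by simp
next
  case False
  have qp: "qnorm Q v > 0" using qnorm_pos[OF Q False] .
  have bb: "bdd_below ((\<lambda>v. qnorm Q (L *v v) / qnorm Q v) ` (S - {0}))"
    by (rule bdd_belowI2[of _ 0]) (simp add: qnorm_nonneg[OF Q])
  have "restr_conorm Q L S \<le> qnorm Q (L *v v) / qnorm Q v" unfolding restr_conorm_def
    using v False by (intro cINF_lower bb) auto
  with le have "g \<le> qnorm Q (L *v v) / qnorm Q v" by simp
  thus ?thesis using qp by (simp add: le_divide_eq)
qed

definition proj :: "(real^'n) set \<Rightarrow> (real^'n) set \<Rightarrow> real^'n \<Rightarrow> real^'n" where
  "proj U S y = (SOME b. b \<in> U \<and> y - b \<in> S)"

locale splitQ =
  fixes Q :: "real^'n^'n" and U S :: "(real^'n) set"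
  assumes Q: "inner_product_matrix Q"
    and U: "subspace U" and S: "subspace S" and disj: "U \<inter> S = {0}"
    and span: "\<And>y. \<exists>a\<in>U. \<exists>b\<in>S. y = a + b"
    and orth: "\<And>u v. u \<in> S \<Longrightarrow> v \<in> U \<Longrightarrow> ipQ Q u v = 0"
begin

lemma proj_prop: "proj U S y \<in> U \<and> y - proj U S y \<in> S"
proof -
  obtain a b where "a \<in> U" "b \<in> S" "y = a + b" using span by blast
  hence "\<exists>a. a \<in> U \<and> y - a \<in> S" by (intro exI[of _ a]) auto
  thus ?thesis unfolding proj_def by (rule someI_ex)
qed

lemma proj_in: "proj U S y \<in> U" and proj_res: "y - proj U S y \<in> S" using proj_prop by auto

lemma proj_unique: assumes "b \<in> U" "y - b \<in> S" shows "proj U S y = b"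
proof -
  have "proj U S y - b \<in> U" using proj_in assms subspace_diff[OF U] by blast
  moreover have "proj U S y - b = (y - b) - (y - proj U S y)" by simp
  hence "proj U S y - b \<in> S" using proj_res assms subspace_diff[OF S] by metis
  ultimately have "proj U S y - b \<in> U \<inter> S" by blast
  thus ?thesis using disj by auto
qed

lemma proj_diff: "proj U S (x - y) = proj U S x - proj U S y"
proof (rule proj_unique)
  show "proj U S x - proj U S y \<in> U" using proj_in subspace_diff[OF U] by blast
  have "x - y - (proj U S x - proj U S y) = (x - proj U S x) - (y - proj U S y)" by simp
  thus "x - y - (proj U S x - proj U S y) \<in> S" using proj_res subspace_diff[OF S] by metis
qed

lemma proj_add: "proj U S (x + y) = proj U S x + proj U S y"
proof (rule proj_unique)
  show "proj U S x + proj U S y \<in> U" using proj_in subspace_add[OF U] by blast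
  have "x + y - (proj U S x + proj U S y) = (x - proj U S x) + (y - proj U S y)" by simp
  thus "x + y - (proj U S x + proj U S y) \<in> S" using proj_res subspace_add[OF S] by metis
qed

lemma proj_norm: "qnorm Q (proj U S y) \<le> qnorm Q y"
proof -
  let ?u = "proj U S y" let ?s = "y - proj U S y"
  have o1: "ipQ Q ?s ?u = 0" using orth proj_in proj_res by blast
  have o2: "ipQ Q ?u ?s = 0" using o1 ipQ_sym[OF Q] by metis
  have "qnorm Q y ^ 2 = ipQ Q (?u + ?s) (?u + ?s)" using qnorm_sq[OF Q] by simp
  also have "\<dots> = ipQ Q ?u ?u + ipQ Q ?s ?u + (ipQ Q ?u ?s + ipQ Q ?s ?s)"
    by (simp only: ipQ_add_left ipQ_add_right)
  also have "\<dots> = qnorm Q ?u ^ 2 + qnorm Q ?s ^ 2" using o1 o2 qnorm_sq[OF Q] by simp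
  finally have "qnorm Q ?u ^ 2 \<le> qnorm Q y ^ 2" by simp
  thus ?thesis using qnorm_nonneg[OF Q] by (meson power2_le_imp_le)
qed

lemma proj_comm: assumes "(\<lambda>v. A *v v) ` U = U" "(\<lambda>v. A *v v) ` S = S"
  shows "proj U S (A *v y) = A *v proj U S y"
proof (rule proj_unique)
  show "A *v proj U S y \<in> U" using proj_in assms(1) by blast
  have "A *v y - A *v proj U S y = A *v (y - proj U S y)" by (simp add: matrix_vector_mult_diff_distrib)
  thus "A *v y - A *v proj U S y \<in> S" using proj_res assms(2) by (metis image_eqI)
qed

end

lemma growth_bound:
  fixes w :: "nat \<Rightarrow> real"
  assumes r: "r > 1" and g: "0 \<le> g" "g < r" and K: "K \<ge> 0"
    and step: "\<And>k. w (Suc k) - K \<ge> r * (w k - K)"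
    and up: "\<And>k. w k \<le> g ^ k * L"
  shows "w 0 \<le> K"
proof (rule ccontr)
  assume "\<not> w 0 \<le> K"
  define d where "d = w 0 - K"
  have d: "d > 0" using \<open>\<not> w 0 \<le> K\<close> d_def by simp
  have ind: "w k - K \<ge> r ^ k * d" for k
  proof (induction k)
    case 0 thus ?case by (simp add: d_def)
  next
    case (Suc k)
    have "r ^ Suc k * d = r * (r ^ k * d)" by simp
    also have "\<dots> \<le> r * (w k - K)" using Suc r by (intro mult_left_mono) auto
    also have "\<dots> \<le> w (Suc k) - K" by (rule step)
    finally show ?case .
  qed
  have rp: "r > 0" using r by simp
  have "(\<lambda>k. (g / r) ^ k * L) \<longlonglongrightarrow> 0 * L"
    by (intro tendsto_mult tendsto_const LIMSEQ_power_zero) (use g rp in \<open>auto simp: divide_simps\<close>)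
  hence "eventually (\<lambda>k. (g / r) ^ k * L < d) sequentially" using d by (simp add: order_tendstoD)
  then obtain k where k: "(g / r) ^ k * L < d" by (auto simp: eventually_sequentially)
  have "r ^ k * d \<le> g ^ k * L" using ind[of k] up[of k] K by linarith
  hence "d \<le> (g ^ k * L) / r ^ k" using rp by (simp add: le_divide_eq mult.commute)
  also have "\<dots> = (g / r) ^ k * L" by (simp add: power_divide)
  finally show False using k by simp
qed



lemma periodic_bounded:
  fixes \<phi> :: "real^'n \<Rightarrow> real^'n"
  assumes Q: "inner_product_matrix Q" and cont: "continuous_on UNIV \<phi>"
    and per: "\<And>x z. z \<in> int_lattice \<Longrightarrow> \<phi> (x + z) = \<phi> x"
  shows "\<exists>C. \<forall>x. qnorm Q (\<phi> x) \<le> C"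
proof -
  let ?K = "cbox (0::real^'n) (\<chi> i. 1)"
  have "(0::real^'n) \<in> ?K" by (simp add: mem_box_cart)
  hence ne: "?K \<noteq> {}" by blast
  have ct: "continuous_on ?K (\<lambda>x. qnorm Q (\<phi> x))"
    by (rule continuous_on_compose2[OF continuous_qnorm continuous_on_subset[OF cont]]) auto
  obtain m where m: "m \<in> ?K" "\<And>y. y \<in> ?K \<Longrightarrow> qnorm Q (\<phi> y) \<le> qnorm Q (\<phi> m)"
    using continuous_attains_sup[OF compact_cbox ne ct] by blast
  have "qnorm Q (\<phi> x) \<le> qnorm Q (\<phi> m)" for x
  proof -
    define z :: "real^'n" where "z = (\<chi> i. of_int \<lfloor>x $ i\<rfloor>)"
    have zl: "z \<in> int_lattice" unfolding int_lattice_def z_def by simp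
    have "x - z \<in> ?K" unfolding mem_box_cart z_def
      by (auto simp: of_int_floor_le) (smt (verit) real_of_int_floor_add_one_gt)
    hence "qnorm Q (\<phi> (x - z)) \<le> qnorm Q (\<phi> m)" by (rule m(2))
    moreover have "\<phi> (x - z) = \<phi> x" using per[OF zl, of "x - z"] by simp
    ultimately show ?thesis by simp
  qed
  thus ?thesis by blast
qed

lemma curve_bound:
  fixes h h' :: "real \<Rightarrow> real^'n"
  assumes Q: "inner_product_matrix Q"
    and der: "\<And>t. t \<in> {0..1} \<Longrightarrow> (h has_derivative (\<lambda>s. s *\<^sub>R h' t)) (at t within {0..1})"
    and bd: "\<And>t. t \<in> {0..1} \<Longrightarrow> qnorm Q (h' t) \<le> B"
  shows "qnorm Q (h 1 - h 0) \<le> B"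
proof -
  define w where "w = h 1 - h 0"
  define f where "f t = h t \<bullet> (Q *v w)" for t
  have "\<And>t. 0 \<le> t \<Longrightarrow> t \<le> 1 \<Longrightarrow> (f has_derivative (\<lambda>s. (s *\<^sub>R h' t) \<bullet> (Q *v w))) (at t within {0..1})"
    unfolding f_def by (intro has_derivative_inner_left der) auto
  from mvt_very_simple[OF _ this] obtain t where t: "t \<in> {0..1}" "f 1 - f 0 = (1 *\<^sub>R h' t) \<bullet> (Q *v w)"
    by force
  have "qnorm Q w ^ 2 = f 1 - f 0" unfolding f_def w_def qnorm_sq[OF Q] ipQ_def by (simp add: inner_diff_left)
  also have "\<dots> = ipQ Q (h' t) w" using t by (simp add: ipQ_def)
  also have "\<dots> \<le> qnorm Q (h' t) * qnorm Q w" using ipQ_CS[OF Q, of "h' t" w] by simp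
  also have "\<dots> \<le> B * qnorm Q w" using bd[OF t(1)] qnorm_nonneg[OF Q] by (intro mult_right_mono) auto
  finally have *: "qnorm Q w * qnorm Q w \<le> B * qnorm Q w" by (simp add: power2_eq_square)
  have B0: "B \<ge> 0" using bd[OF t(1)] qnorm_nonneg[OF Q, of "h' t"] by simp
  show ?thesis
  proof (cases "qnorm Q w = 0")
    case True thus ?thesis using B0 w_def by simp
  next
    case False
    hence "qnorm Q w > 0" using qnorm_nonneg[OF Q, of w] by simp
    with * show ?thesis unfolding w_def by simp
  qed
qed

lemma plaque_curve:
  assumes ch: "foliation_chart M N Ef \<phi>" and M: "subspace M"
    and d1: "(a, b) \<in> chart_dom M N" and d2: "(a', b) \<in> chart_dom M N"
    and Q: "inner_product_matrix Q"
  shows "\<exists>c v B. c 0 = \<phi> (a, b) \<and> c 1 = \<phi> (a', b) \<and>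
     (\<forall>t\<in>{0..1}. (c has_derivative (\<lambda>s. s *\<^sub>R v t)) (at t within {0..1}) \<and>
         v t \<in> Ef (c t) \<and> qnorm Q (v t) \<le> B)"
proof -
  have aM: "a \<in> M \<inter> ball 0 1" and aM': "a' \<in> M \<inter> ball 0 1" and bN: "b \<in> N \<inter> ball 0 1"
    using d1 d2 by (auto simp: chart_dom_def)
  obtain D where Dc: "continuous_on (M \<inter> ball 0 1) D"
    and Dd: "\<And>x. x \<in> M \<inter> ball 0 1 \<Longrightarrow> ((\<lambda>a'. \<phi> (a', b)) has_derivative (\<lambda>h. D x *v h)) (at x within (M \<inter> ball 0 1))"
    and Di: "\<And>x. x \<in> M \<inter> ball 0 1 \<Longrightarrow> (\<lambda>h. D x *v h) ` M = Ef (\<phi> (x, b))"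
    using ch bN unfolding foliation_chart_def by metis
  define p where "p t = a + t *\<^sub>R (a' - a)" for t :: real
  have conv: "convex (M \<inter> ball 0 1)" using M by (intro convex_Int convex_ball subspace_imp_convex)
  have pin: "p t \<in> M \<inter> ball 0 1" if "t \<in> {0..1}" for t
  proof -
    have "p t = (1 - t) *\<^sub>R a + t *\<^sub>R a'" unfolding p_def by (simp add: algebra_simps)
    thus ?thesis using that conv aM aM' unfolding convex_def by auto
  qed
  have pd: "(p has_derivative (\<lambda>s. s *\<^sub>R (a' - a))) (at t within {0..1})" for t
    unfolding p_def by (auto intro!: derivative_eq_intros)
  define c where "c t = \<phi> (p t, b)" for t
  define v where "v t = D (p t) *v (a' - a)" for t
  have cd: "(c has_derivative (\<lambda>s. s *\<^sub>R v t)) (at t within {0..1})" if t: "t \<in> {0..1}" for t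
  proof -
    have "((\<lambda>x. \<phi> (p x, b)) has_derivative (\<lambda>y. D (p t) *v (y *\<^sub>R (a' - a)))) (at t within {0..1})"
      by (rule has_derivative_in_compose2[of "M \<inter> ball 0 1" "\<lambda>a'. \<phi> (a', b)" "\<lambda>x h. D x *v h"])
         (use Dd pin t pd in auto)
    thus ?thesis unfolding c_def v_def by (simp add: matrix_vector_mult_scaleR)
  qed
  have vin: "v t \<in> Ef (c t)" if "t \<in> {0..1}" for t
  proof -
    have "a' - a \<in> M" using aM aM' subspace_diff[OF M] by blast
    hence "v t \<in> (\<lambda>h. D (p t) *v h) ` M" unfolding v_def by blast
    thus ?thesis using Di[OF pin[OF that]] unfolding c_def by simp
  qed
  have lin: "linear (\<lambda>X::real^'a^'a. X *v (a' - a))"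
    by (simp add: linear_iff matrix_vector_mult_add_rdistrib scaleR_matrix_vector_assoc)
  have pc: "continuous_on {0..1} p" unfolding p_def by (intro continuous_intros)
  have vc: "continuous_on {0..1} v" unfolding v_def
    by (rule linear_continuous_on_compose[OF continuous_on_compose2[OF Dc pc] lin]) (use pin in auto)
  have qc: "continuous_on {0..1} (\<lambda>t. qnorm Q (v t))"
    by (rule continuous_on_compose2[OF continuous_qnorm vc]) auto
  obtain m where m: "m \<in> {0..1::real}" "\<And>y. y \<in> {0..1} \<Longrightarrow> qnorm Q (v y) \<le> qnorm Q (v m)"
    using continuous_attains_sup[OF compact_Icc _ qc] by force
  have "c 0 = \<phi> (a, b)" "c 1 = \<phi> (a', b)" unfolding c_def p_def by auto
  thus ?thesis using cd vin m(2) by blast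
qed



lemma iterate_curve:
  fixes T :: "real^'n \<Rightarrow> real^'n" and DT :: "real^'n \<Rightarrow> real^'n^'n"
  assumes Q: "inner_product_matrix Q"
    and Tder: "\<And>x. (T has_derivative (\<lambda>h. DT x *v h)) (at x)"
    and Tinv: "\<And>x v. v \<in> Ef x \<Longrightarrow> DT x *v v \<in> Ef (T x)"
    and Tbd: "\<And>x v. v \<in> Ef x \<Longrightarrow> qnorm Q (DT x *v v) \<le> g * qnorm Q v"
    and g: "g \<ge> 0"
    and curve: "\<forall>t\<in>{0..1}. (c has_derivative (\<lambda>s. s *\<^sub>R v t)) (at t within {0..1}) \<and>
         v t \<in> Ef (c t) \<and> qnorm Q (v t) \<le> B"
  shows "qnorm Q ((T ^^ k) (c 1) - (T ^^ k) (c 0)) \<le> g ^ k * B"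
proof -
  have "\<exists>vk. \<forall>t\<in>{0..1}. ((\<lambda>t. (T ^^ k) (c t)) has_derivative (\<lambda>s. s *\<^sub>R vk t)) (at t within {0..1}) \<and>
         vk t \<in> Ef ((T ^^ k) (c t)) \<and> qnorm Q (vk t) \<le> g ^ k * B"
  proof (induction k)
    case 0 thus ?case using curve by (intro exI[of _ v]) simp
  next
    case (Suc k)
    then obtain vk where vk: "\<forall>t\<in>{0..1}. ((\<lambda>t. (T ^^ k) (c t)) has_derivative (\<lambda>s. s *\<^sub>R vk t)) (at t within {0..1}) \<and>
         vk t \<in> Ef ((T ^^ k) (c t)) \<and> qnorm Q (vk t) \<le> g ^ k * B" by blast
    define w where "w t = DT ((T ^^ k) (c t)) *v vk t" for t
    have "((\<lambda>t. (T ^^ Suc k) (c t)) has_derivative (\<lambda>s. s *\<^sub>R w t)) (at t within {0..1}) \<and>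
         w t \<in> Ef ((T ^^ Suc k) (c t)) \<and> qnorm Q (w t) \<le> g ^ Suc k * B" if t: "t \<in> {0..1}" for t
    proof (intro conjI)
      have "((\<lambda>x. T ((T ^^ k) (c x))) has_derivative (\<lambda>s. DT ((T ^^ k) (c t)) *v (s *\<^sub>R vk t))) (at t within {0..1})"
        by (rule has_derivative_compose[OF _ Tder]) (use vk t in blast)
      thus "((\<lambda>t. (T ^^ Suc k) (c t)) has_derivative (\<lambda>s. s *\<^sub>R w t)) (at t within {0..1})"
        by (simp add: w_def matrix_vector_mult_scaleR)
      show "w t \<in> Ef ((T ^^ Suc k) (c t))" unfolding w_def using Tinv vk t by simp
      have "qnorm Q (w t) \<le> g * qnorm Q (vk t)" unfolding w_def using Tbd vk t by blast
      also have "\<dots> \<le> g * (g ^ k * B)" using vk t g by (intro mult_left_mono) auto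
      finally show "qnorm Q (w t) \<le> g ^ Suc k * B" by simp
    qed
    thus ?case by blast
  qed
  then obtain vk where vk: "\<forall>t\<in>{0..1}. ((\<lambda>t. (T ^^ k) (c t)) has_derivative (\<lambda>s. s *\<^sub>R vk t)) (at t within {0..1}) \<and>
         vk t \<in> Ef ((T ^^ k) (c t)) \<and> qnorm Q (vk t) \<le> g ^ k * B" by blast
  show ?thesis
    by (rule curve_bound[OF Q, of "\<lambda>t. (T ^^ k) (c t)" vk]) (use vk in auto)
qed

lemma leaf_bound:
  fixes T :: "real^'n \<Rightarrow> real^'n" and DT :: "real^'n \<Rightarrow> real^'n^'n"
  assumes Q: "inner_product_matrix Q"
    and Tder: "\<And>x. (T has_derivative (\<lambda>h. DT x *v h)) (at x)"
    and Tinv: "\<And>x v. v \<in> Ef x \<Longrightarrow> DT x *v v \<in> Ef (T x)"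
    and Tbd: "\<And>x v. v \<in> Ef x \<Longrightarrow> qnorm Q (DT x *v v) \<le> g * qnorm Q v"
    and g: "g \<ge> 0"
    and atlas: "foliation_atlas M N Ef \<A>" and M: "subspace M"
    and y: "y \<in> leaf_of M N \<A> x"
  shows "\<exists>L. \<forall>k. qnorm Q ((T ^^ k) y - (T ^^ k) x) \<le> g ^ k * L"
proof -
  have pl: "\<exists>B. \<forall>k. qnorm Q ((T ^^ k) z - (T ^^ k) u) \<le> g ^ k * B"
    if pA: "\<phi> \<in> \<A>" and pz: "z \<in> plaque_through M N \<phi> u" for \<phi> u z
  proof -
    obtain a a' b where ab: "(a, b) \<in> chart_dom M N" "(a', b) \<in> chart_dom M N" "\<phi> (a, b) = u" "\<phi> (a', b) = z"
      using pz unfolding plaque_through_def by blast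
    have ch: "foliation_chart M N Ef \<phi>" using atlas pA unfolding foliation_atlas_def by blast
    obtain c v B where c: "c 0 = \<phi> (a, b)" "c 1 = \<phi> (a', b)"
      "\<forall>t\<in>{0..1}. (c has_derivative (\<lambda>s. s *\<^sub>R v t)) (at t within {0..1}) \<and> v t \<in> Ef (c t) \<and> qnorm Q (v t) \<le> B"
      using plaque_curve[OF ch M ab(1,2) Q] by blast
    have "qnorm Q ((T ^^ k) (c 1) - (T ^^ k) (c 0)) \<le> g ^ k * B" for k
      by (rule iterate_curve[OF Q Tder Tinv Tbd g c(3)])
    thus ?thesis using c ab by auto
  qed
  have "(\<lambda>u v. \<exists>\<phi>\<in>\<A>. v \<in> plaque_through M N \<phi> u \<or> u \<in> plaque_through M N \<phi> v)\<^sup>*\<^sup>* x y"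
    using y unfolding leaf_of_def by simp
  thus ?thesis
  proof (induction rule: rtranclp_induct)
    case base thus ?case by (intro exI[of _ 0]) simp
  next
    case (step y z)
    obtain L1 where L1: "\<And>k. qnorm Q ((T ^^ k) y - (T ^^ k) x) \<le> g ^ k * L1" using step.IH by blast
    obtain B where B: "\<And>k. qnorm Q ((T ^^ k) z - (T ^^ k) y) \<le> g ^ k * B"
    proof -
      obtain \<phi> where "\<phi> \<in> \<A>" and dj: "z \<in> plaque_through M N \<phi> y \<or> y \<in> plaque_through M N \<phi> z" using step.hyps(2) by blast
      from dj show ?thesis
      proof
        assume "z \<in> plaque_through M N \<phi> y" thus ?thesis using pl[OF \<open>\<phi> \<in> \<A>\<close>] that by blast
      next
        assume "y \<in> plaque_through M N \<phi> z"
        then obtain B where "\<forall>k. qnorm Q ((T ^^ k) y - (T ^^ k) z) \<le> g ^ k * B" using pl[OF \<open>\<phi> \<in> \<A>\<close>] by blast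
        thus ?thesis using that qnorm_commute[OF Q] by metis
      qed
    qed
    have "qnorm Q ((T ^^ k) z - (T ^^ k) x) \<le> g ^ k * (B + L1)" for k
      using qnorm_triangle_diff[OF Q, of "(T ^^ k) z" "(T ^^ k) x" "(T ^^ k) y"] B[of k] L1[of k]
      by (simp add: distrib_left)
    thus ?case by blast
  qed
qed



lemma matrix_inv_props:
  fixes M :: "real^'n^'n"
  assumes "invertible M" shows "M ** matrix_inv M = mat 1" "matrix_inv M ** M = mat 1"
proof -
  have "\<exists>A'. M ** A' = mat 1 \<and> A' ** M = mat 1" using assms unfolding invertible_def by blast
  hence "M ** matrix_inv M = mat 1 \<and> matrix_inv M ** M = mat 1" unfolding matrix_inv_def by (rule someI_ex)
  thus "M ** matrix_inv M = mat 1" "matrix_inv M ** M = mat 1" by auto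
qed

lemma rev_tri: assumes Q: "inner_product_matrix Q" shows "qnorm Q a - qnorm Q b \<le> qnorm Q (a + b)"
  using qnorm_triangle[OF Q, of "a + b" "- b"] qnorm_minus[OF Q, of b] by simp

theorem mainTheorem7:
  fixes A Q :: "real^'n^'n"
    and Es Eu :: "(real^'n) set"
    and lam gam lamh gamh :: real
    and F :: "real^'n \<Rightarrow> real^'n"
    and DF :: "real^'n \<Rightarrow> real^'n^'n"
    and E G :: "real^'n \<Rightarrow> (real^'n) set"
    and WE WG :: "real^'n \<Rightarrow> (real^'n) set"
  assumes aut: "torus_automorphism A"
    and adapted: "inner_product_matrix Q"
    and Es_sub: "subspace Es" and Eu_sub: "subspace Eu"
    and Es_inv: "(\<lambda>v. A *v v) ` Es = Es" and Eu_inv: "(\<lambda>v. A *v v) ` Eu = Eu"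
    and split_A: "Es \<inter> Eu = {0}" "{a + b |a b. a \<in> Es \<and> b \<in> Eu} = UNIV"
    and orth: "\<forall>u\<in>Es. \<forall>v\<in>Eu. ipQ Q u v = 0"
    and contr: "restr_norm Q A Es \<le> lam"
    and expd: "restr_conorm Q A Eu \<ge> gam"
    and rates: "0 < lam" "lam < 1" "1 < gam"
    and diffeo: "torus_diffeo_lift A F DF"
    and dom: "dominated_splitting Q F DF E G"
    and per: "periodic_field E" "periodic_field G"
    and dims: "\<forall>x. dim (E x) = dim Es" "\<forall>x. dim (G x) = dim Eu"
    and bdE: "\<forall>x. restr_norm Q (DF x) (E x) \<le> gamh" "gamh < gam"
    and bdG: "\<forall>x. restr_conorm Q (DF x) (G x) \<ge> lamh" "lamh > lam"
    and folE: "tangent_foliation Es Eu E WE" "periodic_foliation WE"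
    and folG: "tangent_foliation Eu Es G WG" "periodic_foliation WG"
  shows "\<exists>R>0. \<forall>x. WE x \<subseteq> qnbhd Q R ((\<lambda>v. x + v) ` Es) \<and>
                  WG x \<subseteq> qnbhd Q R ((\<lambda>v. x + v) ` Eu)"
proof -
  note Q = adapted
  have bijF: "bij F" and Fder: "\<And>x. (F has_derivative (\<lambda>h. DF x *v h)) (at x)"
    and DFi: "\<And>x. invertible (DF x)"
    and Flat: "\<And>x z. z \<in> int_lattice \<Longrightarrow> F (x + z) = F x + A *v z"
    using diffeo unfolding torus_diffeo_lift_def by auto
  have Fcont: "continuous_on UNIV F"
    by (rule continuous_at_imp_continuous_on) (use Fder has_derivative_continuous in blast)
  define \<phi> where "\<phi> x = F x - A *v x" for x
  have \<phi>c: "continuous_on UNIV \<phi>" unfolding \<phi>_def by (intro continuous_intros Fcont)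
  have \<phi>p: "\<phi> (x + z) = \<phi> x" if "z \<in> int_lattice" for x z
    unfolding \<phi>_def using Flat[OF that, of x] by (simp add: matrix_vector_right_distrib)
  obtain C where C: "\<And>x. qnorm Q (\<phi> x) \<le> C" using periodic_bounded[OF Q \<phi>c \<phi>p] by blast
  have C0: "C \<ge> 0" using C[of 0] qnorm_nonneg[OF Q, of "\<phi> 0"] by simp
  have Fphi: "F p - F q = A *v (p - q) + (\<phi> p - \<phi> q)" for p q
    unfolding \<phi>_def by (simp add: matrix_vector_mult_diff_distrib)
  have e2C: "qnorm Q (\<phi> p - \<phi> q) \<le> 2 * C" for p q
    using qnorm_triangle[OF Q, of "\<phi> p" "- \<phi> q"] qnorm_minus[OF Q, of "\<phi> q"] C[of p] C[of q] by simp
  have domE: "\<And>x. (\<lambda>v. DF x *v v) ` E x = E (F x)" and domG: "\<And>x. (\<lambda>v. DF x *v v) ` G x = G (F x)"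
    using dom unfolding dominated_splitting_def by auto
  have spanA: "\<exists>a\<in>Es. \<exists>b\<in>Eu. y = a + b" for y
  proof -
    have "y \<in> {a + b |a b. a \<in> Es \<and> b \<in> Eu}" using split_A(2) by simp
    thus ?thesis by blast
  qed
  have spanB: "\<exists>a\<in>Eu. \<exists>b\<in>Es. y = a + b" for y
    using spanA[of y] by (metis add.commute)
  interpret su: splitQ Q Eu Es
    by unfold_locales (use Q Eu_sub Es_sub split_A(1) orth spanB in auto)
  interpret ss: splitQ Q Es Eu
  proof unfold_locales
    show "\<And>u v. u \<in> Eu \<Longrightarrow> v \<in> Es \<Longrightarrow> ipQ Q u v = 0" using orth ipQ_sym[OF Q] by metis
  qed (use Q Eu_sub Es_sub split_A(1) spanA in auto)
  define gE where "gE = max gamh 0"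
  define K1 where "K1 = 2 * C / (gam - 1)"
  have K1: "K1 \<ge> 0" unfolding K1_def using C0 rates by simp
  have partE: "qnorm Q (proj Eu Es (y - x)) \<le> K1" if y: "y \<in> WE x" for x y
  proof -
    obtain \<A> where at: "foliation_atlas Es Eu E \<A>" and W: "\<And>x. WE x = leaf_of Es Eu \<A> x"
      using folE(1) unfolding tangent_foliation_def by blast
    have Tinv: "\<And>x v. v \<in> E x \<Longrightarrow> DF x *v v \<in> E (F x)" using domE by blast
    have Tbd: "qnorm Q (DF x *v v) \<le> gE * qnorm Q v" if "v \<in> E x" for x v
    proof -
      have "qnorm Q (DF x *v v) \<le> gamh * qnorm Q v" using restr_norm_le[OF Q bdE(1)[rule_format] that] .
      also have "\<dots> \<le> gE * qnorm Q v" unfolding gE_def using qnorm_nonneg[OF Q, of v] by (intro mult_right_mono) auto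
      finally show ?thesis .
    qed
    obtain L where L: "\<And>k. qnorm Q ((F ^^ k) y - (F ^^ k) x) \<le> gE ^ k * L"
      using leaf_bound[OF Q Fder Tinv Tbd _ at Es_sub, of y x] y W unfolding gE_def by auto
    define w where "w k = qnorm Q (proj Eu Es ((F ^^ k) y - (F ^^ k) x))" for k
    show ?thesis
    proof -
      have "w 0 \<le> K1"
      proof (rule growth_bound[of gam gE K1 w L])
        show "1 < gam" "0 \<le> gE" "gE < gam" "0 \<le> K1" using rates bdE(2) K1 unfolding gE_def by auto
        show "w k \<le> gE ^ k * L" for k using L[of k] su.proj_norm order_trans unfolding w_def by blast
        show "gam * (w k - K1) \<le> w (Suc k) - K1" for k
        proof -
          let ?p = "(F ^^ k) y" and ?q = "(F ^^ k) x"
          let ?d = "proj Eu Es (?p - ?q)"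
          have "(F ^^ Suc k) y - (F ^^ Suc k) x = A *v (?p - ?q) + (\<phi> ?p - \<phi> ?q)" using Fphi by simp
          hence eq: "proj Eu Es ((F ^^ Suc k) y - (F ^^ Suc k) x) = A *v ?d + proj Eu Es (\<phi> ?p - \<phi> ?q)"
            using su.proj_add su.proj_comm[OF Eu_inv Es_inv] by simp
          have "gam * w k \<le> qnorm Q (A *v ?d)" unfolding w_def
            by (rule restr_conorm_ge[OF Q expd su.proj_in])
          moreover have "qnorm Q (proj Eu Es (\<phi> ?p - \<phi> ?q)) \<le> 2 * C" using su.proj_norm e2C order_trans by blast
          moreover have "qnorm Q (A *v ?d) - qnorm Q (proj Eu Es (\<phi> ?p - \<phi> ?q)) \<le> w (Suc k)"
            unfolding w_def eq using qnorm_triangle[OF Q, of "A *v ?d + proj Eu Es (\<phi> ?p - \<phi> ?q)" "- proj Eu Es (\<phi> ?p - \<phi> ?q)"]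
            qnorm_minus[OF Q, of "proj Eu Es (\<phi> ?p - \<phi> ?q)"] by simp
          ultimately have "gam * w k - 2 * C \<le> w (Suc k)" by simp
          moreover have "(gam - 1) * K1 = 2 * C" unfolding K1_def using rates by simp
          ultimately show ?thesis by (simp add: algebra_simps)
        qed
      qed
      thus ?thesis unfolding w_def by simp
    qed
  qed
  define Fi where "Fi = inv F"
  have FFi: "F (Fi y) = y" for y unfolding Fi_def using bijF by (simp add: bij_is_surj surj_f_inv_f)
  have FiF: "Fi (F x) = x" for x unfolding Fi_def using bijF by (simp add: bij_is_inj)
  define DFi where "DFi y = matrix_inv (DF (Fi y))" for y
  have Fider: "(Fi has_derivative (\<lambda>h. DFi y *v h)) (at y)" for y
  proof -
    have "(Fi has_derivative (\<lambda>h. matrix_inv (DF (Fi y)) *v h)) (at (F (Fi y)))"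
    proof (rule has_derivative_inverse_strong[of UNIV "Fi y" F Fi])
      show "(\<lambda>h. DF (Fi y) *v h) \<circ> (\<lambda>h. matrix_inv (DF (Fi y)) *v h) = id"
        using matrix_inv_props(1)[OF DFi] by (auto simp: fun_eq_iff matrix_vector_mul_assoc)
    qed (use Fcont FiF Fder in auto)
    thus ?thesis using FFi DFi_def by simp
  qed
  define gG where "gG = 1 / lamh"
  have lamh0: "lamh > 0" using rates bdG(2) by simp
  have GTinv: "DFi y *v w \<in> G (Fi y) \<and> qnorm Q (DFi y *v w) \<le> gG * qnorm Q w" if "w \<in> G y" for y w
  proof -
    have "w \<in> (\<lambda>v. DF (Fi y) *v v) ` G (Fi y)" using domG[of "Fi y"] FFi that by simp
    then obtain u where u: "u \<in> G (Fi y)" "w = DF (Fi y) *v u" by blast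
    have "DFi y *v w = u" unfolding DFi_def u(2) matrix_vector_mul_assoc matrix_inv_props(2)[OF DFi] by simp
    moreover have "lamh * qnorm Q u \<le> qnorm Q w" using restr_conorm_ge[OF Q bdG(1)[rule_format] u(1)] u(2) by simp
    hence "qnorm Q u \<le> gG * qnorm Q w" unfolding gG_def using lamh0 by (simp add: field_simps)
    ultimately show ?thesis using u by simp
  qed
  define K2 where "K2 = 2 * C / (1 - lam)"
  have K2: "K2 \<ge> 0" unfolding K2_def using C0 rates by simp
  have partG: "qnorm Q (proj Es Eu (y - x)) \<le> K2" if y: "y \<in> WG x" for x y
  proof -
    obtain \<A> where at: "foliation_atlas Eu Es G \<A>" and W: "\<And>x. WG x = leaf_of Eu Es \<A> x"
      using folG(1) unfolding tangent_foliation_def by blast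
    have Tinv: "\<And>x v. v \<in> G x \<Longrightarrow> DFi x *v v \<in> G (Fi x)" using GTinv by blast
    have Tbd: "\<And>x v. v \<in> G x \<Longrightarrow> qnorm Q (DFi x *v v) \<le> gG * qnorm Q v" using GTinv by blast
    have gG0: "gG \<ge> 0" unfolding gG_def using lamh0 by simp
    obtain L where L: "\<And>k. qnorm Q ((Fi ^^ k) y - (Fi ^^ k) x) \<le> gG ^ k * L"
      using leaf_bound[OF Q Fider Tinv Tbd gG0 at Eu_sub, of y x] y W by auto
    define w where "w k = qnorm Q (proj Es Eu ((Fi ^^ k) y - (Fi ^^ k) x))" for k
    have "w 0 \<le> K2"
    proof (rule growth_bound[of "1 / lam" gG K2 w L])
      show "1 < 1 / lam" "0 \<le> gG" "0 \<le> K2" using rates gG0 K2 by auto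
      show "gG < 1 / lam" unfolding gG_def using rates bdG(2) by (simp add: frac_less2)
      show "w k \<le> gG ^ k * L" for k using L[of k] ss.proj_norm order_trans unfolding w_def by blast
      show "1 / lam * (w k - K2) \<le> w (Suc k) - K2" for k
      proof -
        let ?p = "(Fi ^^ Suc k) y" and ?q = "(Fi ^^ Suc k) x"
        let ?d = "proj Es Eu (?p - ?q)"
        have "(Fi ^^ k) y - (Fi ^^ k) x = F ?p - F ?q" using FFi by simp
        also have "\<dots> = A *v (?p - ?q) + (\<phi> ?p - \<phi> ?q)" by (rule Fphi)
        finally have eq: "proj Es Eu ((Fi ^^ k) y - (Fi ^^ k) x) = A *v ?d + proj Es Eu (\<phi> ?p - \<phi> ?q)"
          using ss.proj_add ss.proj_comm[OF Es_inv Eu_inv] by simp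
        have "qnorm Q (A *v ?d) \<le> lam * w (Suc k)" unfolding w_def
          by (rule restr_norm_le[OF Q contr ss.proj_in])
        moreover have "qnorm Q (proj Es Eu (\<phi> ?p - \<phi> ?q)) \<le> 2 * C" using ss.proj_norm e2C order_trans by blast
        moreover have "w k \<le> qnorm Q (A *v ?d) + qnorm Q (proj Es Eu (\<phi> ?p - \<phi> ?q))"
          unfolding w_def eq by (rule qnorm_triangle[OF Q])
        ultimately have "w k \<le> lam * w (Suc k) + 2 * C" by simp
        moreover have "(1 - lam) * K2 = 2 * C" unfolding K2_def using rates by simp
        ultimately have "w k - K2 \<le> lam * (w (Suc k) - K2)" by (simp add: algebra_simps)
        thus ?thesis using rates by (simp add: field_simps)
      qed
    qed
    thus ?thesis unfolding w_def by simp
  qed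
  define R where "R = max 1 (max K1 K2)"
  have "R > 0" unfolding R_def by simp
  moreover have "WE x \<subseteq> qnbhd Q R ((\<lambda>v. x + v) ` Es) \<and> WG x \<subseteq> qnbhd Q R ((\<lambda>v. x + v) ` Eu)" for x
  proof
    show "WE x \<subseteq> qnbhd Q R ((\<lambda>v. x + v) ` Es)"
    proof
      fix y assume y: "y \<in> WE x"
      let ?v = "(y - x) - proj Eu Es (y - x)"
      have "?v \<in> Es" by (rule su.proj_res)
      moreover have "qnorm Q (y - (x + ?v)) \<le> R" using partE[OF y] unfolding R_def by simp
      ultimately show "y \<in> qnbhd Q R ((\<lambda>v. x + v) ` Es)" unfolding qnbhd_def by blast
    qed
    show "WG x \<subseteq> qnbhd Q R ((\<lambda>v. x + v) ` Eu)"
    proof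
      fix y assume y: "y \<in> WG x"
      let ?v = "(y - x) - proj Es Eu (y - x)"
      have "?v \<in> Eu" by (rule ss.proj_res)
      moreover have "qnorm Q (y - (x + ?v)) \<le> R" using partG[OF y] unfolding R_def by simp
      ultimately show "y \<in> qnbhd Q R ((\<lambda>v. x + v) ` Eu)" unfolding qnbhd_def by blast
    qed
  qed
  ultimately show ?thesis by blast
qed


end
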